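(* Let $X$ be a nonzero Hermitian $d\times d$ matrix and $y=|\mathrm{tr}(X)|/\|X\|_2$. Then $$\frac{24\,\mathrm{tr}\big(P_{\mathrm{Sym}^4}X^{\otimes4}\big)}{\big(\mathrm{tr}(X^2)+\mathrm{tr}(X)^2\big)^2}\le 3+\frac{6+8y-2y^4}{(1+y^2)^2}\le\frac35\big(7+4\cdot2^{1/3}+3\cdot2^{2/3}\big)\approx10.08113 .$$ The second inequality is an equality iff $y=2^{1/3}-1$. In particular, if $\mathrm{tr}(X)=0$, the left-hand side is strictly less than $9$.
   Context: $P_{\mathrm{Sym}^4}$ is the orthogonal projector onto the totally symmetric subspace of $(\mathbb{C}^d)^{\otimes 4}$. $\|X\|_2$ is the Hilbert–Schmidt norm. *)

theory Defs
  imports "HOL-Analysis.Analysis"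
begin

text \<open>d x d complex matrices are complex^'n^'n with 'n a finite type, d = CARD('n).
  The space (C^d)^{tensor 4} has basis indexed by 'n^4 (i.e. maps from the 4 tensor slots to 'n).\<close>

definition hermitian_mat :: "complex^'n::finite^'n \<Rightarrow> bool" where
  "hermitian_mat X \<longleftrightarrow> (\<forall>i j. X$i$j = cnj (X$j$i))"

definition hs_norm :: "complex^'n::finite^'n \<Rightarrow> real" where
  "hs_norm X = sqrt (\<Sum>i\<in>UNIV. \<Sum>j\<in>UNIV. (cmod (X$i$j))\<^sup>2)"

definition tensor4 :: "complex^'n::finite^'n \<Rightarrow> complex^('n^4)^('n^4)" where
  "tensor4 X = (\<chi> i j. \<Prod>m\<in>UNIV. X$(i$m)$(j$m))"

definition perm_op :: "(4 \<Rightarrow> 4) \<Rightarrow> complex^('n::finite^4)^('n^4)" where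
  "perm_op p = (\<chi> i j. if j = (\<chi> m. i$(p m)) then 1 else 0)"

definition P_sym4 :: "complex^('n::finite^4)^('n^4)" where
  "P_sym4 = (\<chi> i j. (1/24) * (\<Sum>p\<in>{p. p permutes (UNIV :: 4 set)}. (perm_op p :: complex^('n^4)^('n^4))$i$j))"

end

theory Submission
  imports Defs
begin

definition mk4 :: "'a \<Rightarrow> 'a \<Rightarrow> 'a \<Rightarrow> 'a \<Rightarrow> 'a^4" where
  "mk4 a b c d = (\<chi> m. if m = 1 then a else if m = 2 then b else if m = 3 then c else d)"
lemma mk4_nth[simp]: "mk4 a b c d $ 1 = a" "mk4 a b c d $ 2 = b" "mk4 a b c d $ 3 = c" "mk4 a b c d $ 4 = d"
  by (simp_all add: mk4_def)
lemma mk4_eta: "mk4 (i$1) (i$2) (i$3) (i$4) = i"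
proof -
  { fix m :: 4 have "mk4 (i$1) (i$2) (i$3) (i$4) $ m = i$m"
      using exhaust_4[of m] by (elim disjE) simp_all }
  thus ?thesis by (simp add: vec_eq_iff)
qed
lemma sum4:
  fixes F :: "'n::finite \<Rightarrow> 'n \<Rightarrow> 'n \<Rightarrow> 'n \<Rightarrow> 'b::comm_monoid_add"
  shows "(\<Sum>i\<in>(UNIV::('n^4) set). F (i$1) (i$2) (i$3) (i$4)) = (\<Sum>a\<in>UNIV. \<Sum>b\<in>UNIV. \<Sum>c\<in>UNIV. \<Sum>d\<in>UNIV. F a b c d)"
proof -
  have "(\<Sum>a\<in>UNIV. \<Sum>b\<in>UNIV. \<Sum>c\<in>UNIV. \<Sum>d\<in>UNIV. F a b c d)
     = (\<Sum>(a,b,c,d)\<in>UNIV. F a b c d)"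
    unfolding sum.cartesian_product[symmetric] UNIV_Times_UNIV[symmetric] by (simp add: sum.cartesian_product)
  also have "\<dots> = (\<Sum>i\<in>(UNIV::('n^4) set). F (i$1) (i$2) (i$3) (i$4))"
    apply (rule sum.reindex_bij_witness[of _ "\<lambda>i. (i$1,i$2,i$3,i$4)" "\<lambda>(a,b,c,d). mk4 a b c d"])
    apply (simp_all add: mk4_eta split: prod.splits)
    done
  finally show ?thesis by simp
qed

definition Tp :: "complex^'n::finite^'n \<Rightarrow> (4 \<Rightarrow> 4) \<Rightarrow> complex" where
  "Tp X p = (\<Sum>i\<in>(UNIV::('n^4) set). \<Prod>m\<in>UNIV. X$(i$(p m))$(i$m))"

lemma prod4: "(\<Prod>m\<in>(UNIV::4 set). f m) = f 1 * f 2 * f 3 * f 4"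
  unfolding UNIV_4 by (simp add: ac_simps)

lemma Tp_sum: "Tp X p = (\<Sum>a\<in>UNIV. \<Sum>b\<in>UNIV. \<Sum>c\<in>UNIV. \<Sum>d\<in>UNIV.
   X$(mk4 a b c d$(p 1))$a * X$(mk4 a b c d$(p 2))$b * X$(mk4 a b c d$(p 3))$c * X$(mk4 a b c d$(p 4))$d)"
  unfolding Tp_def prod4
  using sum4[of "\<lambda>a b c d. X$(mk4 a b c d$(p 1))$a * X$(mk4 a b c d$(p 2))$b * X$(mk4 a b c d$(p 3))$c * X$(mk4 a b c d$(p 4))$d"]
  by (simp add: mk4_eta)

lemma Tp_conj:
  fixes X :: "complex^'n::finite^'n"
  assumes q: "q permutes UNIV" and pq: "p \<circ> q = q \<circ> r"
  shows "Tp X p = Tp X r"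
proof -
  define \<phi> where "\<phi> = (\<lambda>i::'n^4. \<chi> m. i$(q m))"
  define \<psi> where "\<psi> = (\<lambda>i::'n^4. \<chi> m. i$(inv q m))"
  have qi: "q (inv q m) = m" "inv q (q m) = m" for m
    using q permutes_inverses by fastforce+
  have 1: "(\<Prod>m\<in>UNIV. X$(i$(p m))$(i$m)) = (\<Prod>m\<in>UNIV. X$((\<phi> i)$(r m))$((\<phi> i)$m))" for i
  proof -
    have "(\<Prod>m\<in>UNIV. X$(i$(p m))$(i$m)) = (\<Prod>m\<in>UNIV. X$(i$(p (q m)))$(i$(q m)))"
      using prod.permute[OF q, of "\<lambda>m. X$(i$(p m))$(i$m)"] by (simp add: o_def)
    also have "\<dots> = (\<Prod>m\<in>UNIV. X$((\<phi> i)$(r m))$((\<phi> i)$m))"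
      using pq by (simp add: \<phi>_def fun_eq_iff)
    finally show ?thesis .
  qed
  have "Tp X p = (\<Sum>i\<in>UNIV. (\<lambda>j. \<Prod>m\<in>UNIV. X$(j$(r m))$(j$m)) (\<phi> i))"
    unfolding Tp_def using 1 by simp
  also have "\<dots> = Tp X r"
    unfolding Tp_def
    by (rule sum.reindex_bij_witness[of _ \<psi> \<phi>]) (simp_all add: \<phi>_def \<psi>_def qi vec_eq_iff)
  finally show ?thesis .
qed

lemma Tp_id: "Tp X id = (\<Sum>a\<in>UNIV. X$a$a)^4"
  unfolding Tp_sum by (simp only: id_apply mk4_nth sum_distrib_left[symmetric] sum_distrib_right[symmetric] power4_eq_xxxx)
lemma ab4: "(a::'a::semigroup_mult)*b*c*d = (a*b)*(c*d)" by (simp add: mult.assoc)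
lemma Tp_2: "Tp X (Transposition.transpose 1 2) = (\<Sum>a\<in>UNIV. \<Sum>b\<in>UNIV. X$b$a * X$a$b) * (\<Sum>a\<in>UNIV. X$a$a)^2"
proof -
  have v: "Transposition.transpose 1 2 (1::4) = 2" "Transposition.transpose 1 2 (2::4) = 1"
     "Transposition.transpose 1 2 (3::4) = 3" "Transposition.transpose 1 2 (4::4) = 4" by simp_all
  show ?thesis unfolding Tp_sum v mk4_nth
    apply (simp only: sum_distrib_left[symmetric] sum_distrib_right[symmetric])
    apply (simp only: mult.assoc power2_eq_square)
    done
qed
lemma Tp_3: "Tp X (Transposition.transpose 1 2 \<circ> (Transposition.transpose 2 3)) = (\<Sum>a\<in>UNIV. \<Sum>b\<in>UNIV. \<Sum>c\<in>UNIV. X$b$a * X$c$b * X$a$c) * (\<Sum>a\<in>UNIV. X$a$a)"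
proof -
  have v: "(Transposition.transpose 1 2 \<circ> (Transposition.transpose 2 3)) (1::4) = 2" 
          "(Transposition.transpose 1 2 \<circ> (Transposition.transpose 2 3)) (2::4) = 3" 
          "(Transposition.transpose 1 2 \<circ> (Transposition.transpose 2 3)) (3::4) = 1" 
          "(Transposition.transpose 1 2 \<circ> (Transposition.transpose 2 3)) (4::4) = 4" by simp_all
  show ?thesis unfolding Tp_sum v mk4_nth
    by (simp only: sum_distrib_left[symmetric] sum_distrib_right[symmetric])
qed
lemma Tp_22: "Tp X (Transposition.transpose 1 2 \<circ> (Transposition.transpose 3 4)) = (\<Sum>a\<in>UNIV. \<Sum>b\<in>UNIV. X$b$a * X$a$b)^2"
proof -
  have v: "(Transposition.transpose 1 2 \<circ> (Transposition.transpose 3 4)) (1::4) = 2" 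
          "(Transposition.transpose 1 2 \<circ> (Transposition.transpose 3 4)) (2::4) = 1" 
          "(Transposition.transpose 1 2 \<circ> (Transposition.transpose 3 4)) (3::4) = 4" 
          "(Transposition.transpose 1 2 \<circ> (Transposition.transpose 3 4)) (4::4) = 3" by simp_all
  show ?thesis unfolding Tp_sum v mk4_nth
    by (simp only: ab4 sum_distrib_left[symmetric] sum_distrib_right[symmetric] power2_eq_square)
qed
lemma Tp_4: "Tp X (Transposition.transpose 1 2 \<circ> (Transposition.transpose 2 3 \<circ> (Transposition.transpose 3 4))) = (\<Sum>a\<in>UNIV. \<Sum>b\<in>UNIV. \<Sum>c\<in>UNIV. \<Sum>d\<in>UNIV. X$b$a * X$c$b * X$d$c * X$a$d)"
proof -
  have v: "(Transposition.transpose 1 2 \<circ> (Transposition.transpose 2 3 \<circ> (Transposition.transpose 3 4))) (1::4) = 2" 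
          "(Transposition.transpose 1 2 \<circ> (Transposition.transpose 2 3 \<circ> (Transposition.transpose 3 4))) (2::4) = 3" 
          "(Transposition.transpose 1 2 \<circ> (Transposition.transpose 2 3 \<circ> (Transposition.transpose 3 4))) (3::4) = 4" 
          "(Transposition.transpose 1 2 \<circ> (Transposition.transpose 2 3 \<circ> (Transposition.transpose 3 4))) (4::4) = 1" by simp_all
  show ?thesis unfolding Tp_sum v mk4_nth ..
qed
lemma Tpc_0: "Tp X (Transposition.transpose 3 4) = Tp X (Transposition.transpose 1 2)"
  by (rule Tp_conj[where q="Transposition.transpose 1 3 \<circ> (Transposition.transpose 2 4)"]) (auto simp: fun_eq_iff forall_4 intro!: permutes_compose permutes_swap_id)
lemma Tpc_1: "Tp X (Transposition.transpose 2 3) = Tp X (Transposition.transpose 1 2)"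
  by (rule Tp_conj[where q="Transposition.transpose 1 2 \<circ> (Transposition.transpose 2 3)"]) (auto simp: fun_eq_iff forall_4 intro!: permutes_compose permutes_swap_id)
lemma Tpc_2: "Tp X (Transposition.transpose 2 3 \<circ> (Transposition.transpose 3 4)) = Tp X (Transposition.transpose 1 2 \<circ> (Transposition.transpose 2 3))"
  by (rule Tp_conj[where q="Transposition.transpose 1 2 \<circ> (Transposition.transpose 2 3 \<circ> (Transposition.transpose 3 4))"]) (auto simp: fun_eq_iff forall_4 intro!: permutes_compose permutes_swap_id)
lemma Tpc_3: "Tp X (Transposition.transpose 2 4) = Tp X (Transposition.transpose 1 2)"
  by (rule Tp_conj[where q="Transposition.transpose 1 2 \<circ> (Transposition.transpose 2 4)"]) (auto simp: fun_eq_iff forall_4 intro!: permutes_compose permutes_swap_id)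
lemma Tpc_4: "Tp X (Transposition.transpose 2 4 \<circ> (Transposition.transpose 3 4)) = Tp X (Transposition.transpose 1 2 \<circ> (Transposition.transpose 2 3))"
  by (rule Tp_conj[where q="Transposition.transpose 1 2 \<circ> (Transposition.transpose 2 4)"]) (auto simp: fun_eq_iff forall_4 intro!: permutes_compose permutes_swap_id)
lemma Tpc_5: "Tp X (Transposition.transpose 1 2 \<circ> (Transposition.transpose 2 4)) = Tp X (Transposition.transpose 1 2 \<circ> (Transposition.transpose 2 3))"
  by (rule Tp_conj[where q="Transposition.transpose 3 4"]) (auto simp: fun_eq_iff forall_4 intro!: permutes_compose permutes_swap_id)
lemma Tpc_6: "Tp X (Transposition.transpose 1 2 \<circ> (Transposition.transpose 2 4 \<circ> (Transposition.transpose 3 4))) = Tp X (Transposition.transpose 1 2 \<circ> (Transposition.transpose 2 3 \<circ> (Transposition.transpose 3 4)))"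
  by (rule Tp_conj[where q="Transposition.transpose 3 4"]) (auto simp: fun_eq_iff forall_4 intro!: permutes_compose permutes_swap_id)
lemma Tpc_7: "Tp X (Transposition.transpose 1 3) = Tp X (Transposition.transpose 1 2)"
  by (rule Tp_conj[where q="Transposition.transpose 2 3"]) (auto simp: fun_eq_iff forall_4 intro!: permutes_compose permutes_swap_id)
lemma Tpc_8: "Tp X (Transposition.transpose 1 3 \<circ> (Transposition.transpose 3 4)) = Tp X (Transposition.transpose 1 2 \<circ> (Transposition.transpose 2 3))"
  by (rule Tp_conj[where q="Transposition.transpose 2 3 \<circ> (Transposition.transpose 3 4)"]) (auto simp: fun_eq_iff forall_4 intro!: permutes_compose permutes_swap_id)
lemma Tpc_9: "Tp X (Transposition.transpose 1 3 \<circ> (Transposition.transpose 2 3)) = Tp X (Transposition.transpose 1 2 \<circ> (Transposition.transpose 2 3))"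
  by (rule Tp_conj[where q="Transposition.transpose 2 3"]) (auto simp: fun_eq_iff forall_4 intro!: permutes_compose permutes_swap_id)
lemma Tpc_10: "Tp X (Transposition.transpose 1 3 \<circ> (Transposition.transpose 2 3 \<circ> (Transposition.transpose 3 4))) = Tp X (Transposition.transpose 1 2 \<circ> (Transposition.transpose 2 3 \<circ> (Transposition.transpose 3 4)))"
  by (rule Tp_conj[where q="Transposition.transpose 2 3 \<circ> (Transposition.transpose 3 4)"]) (auto simp: fun_eq_iff forall_4 intro!: permutes_compose permutes_swap_id)
lemma Tpc_11: "Tp X (Transposition.transpose 1 3 \<circ> (Transposition.transpose 2 4)) = Tp X (Transposition.transpose 1 2 \<circ> (Transposition.transpose 3 4))"
  by (rule Tp_conj[where q="Transposition.transpose 2 3"]) (auto simp: fun_eq_iff forall_4 intro!: permutes_compose permutes_swap_id)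
lemma Tpc_12: "Tp X (Transposition.transpose 1 3 \<circ> (Transposition.transpose 2 4 \<circ> (Transposition.transpose 3 4))) = Tp X (Transposition.transpose 1 2 \<circ> (Transposition.transpose 2 3 \<circ> (Transposition.transpose 3 4)))"
  by (rule Tp_conj[where q="Transposition.transpose 2 3"]) (auto simp: fun_eq_iff forall_4 intro!: permutes_compose permutes_swap_id)
lemma Tpc_13: "Tp X (Transposition.transpose 1 4) = Tp X (Transposition.transpose 1 2)"
  by (rule Tp_conj[where q="Transposition.transpose 2 4"]) (auto simp: fun_eq_iff forall_4 intro!: permutes_compose permutes_swap_id)
lemma Tpc_14: "Tp X (Transposition.transpose 1 4 \<circ> (Transposition.transpose 3 4)) = Tp X (Transposition.transpose 1 2 \<circ> (Transposition.transpose 2 3))"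
  by (rule Tp_conj[where q="Transposition.transpose 2 4"]) (auto simp: fun_eq_iff forall_4 intro!: permutes_compose permutes_swap_id)
lemma Tpc_15: "Tp X (Transposition.transpose 1 4 \<circ> (Transposition.transpose 2 3)) = Tp X (Transposition.transpose 1 2 \<circ> (Transposition.transpose 3 4))"
  by (rule Tp_conj[where q="Transposition.transpose 2 4"]) (auto simp: fun_eq_iff forall_4 intro!: permutes_compose permutes_swap_id)
lemma Tpc_16: "Tp X (Transposition.transpose 1 4 \<circ> (Transposition.transpose 2 3 \<circ> (Transposition.transpose 3 4))) = Tp X (Transposition.transpose 1 2 \<circ> (Transposition.transpose 2 3 \<circ> (Transposition.transpose 3 4)))"
  by (rule Tp_conj[where q="Transposition.transpose 2 4 \<circ> (Transposition.transpose 3 4)"]) (auto simp: fun_eq_iff forall_4 intro!: permutes_compose permutes_swap_id)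
lemma Tpc_17: "Tp X (Transposition.transpose 1 4 \<circ> (Transposition.transpose 2 4)) = Tp X (Transposition.transpose 1 2 \<circ> (Transposition.transpose 2 3))"
  by (rule Tp_conj[where q="Transposition.transpose 2 4 \<circ> (Transposition.transpose 3 4)"]) (auto simp: fun_eq_iff forall_4 intro!: permutes_compose permutes_swap_id)
lemma Tpc_18: "Tp X (Transposition.transpose 1 4 \<circ> (Transposition.transpose 2 4 \<circ> (Transposition.transpose 3 4))) = Tp X (Transposition.transpose 1 2 \<circ> (Transposition.transpose 2 3 \<circ> (Transposition.transpose 3 4)))"
  by (rule Tp_conj[where q="Transposition.transpose 2 4"]) (auto simp: fun_eq_iff forall_4 intro!: permutes_compose permutes_swap_id)

lemma UNIV4': "(UNIV::4 set) = insert 1 (insert 2 (insert 3 (insert 4 {})))"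
  using UNIV_4 by simp
lemma sum_perms: "(\<Sum>p\<in>{p. p permutes (UNIV::4 set)}. Tp X p) =
   Tp X id + 6 * Tp X (Transposition.transpose 1 2) + 8 * Tp X (Transposition.transpose 1 2 \<circ> (Transposition.transpose 2 3))
   + 3 * Tp X (Transposition.transpose 1 2 \<circ> (Transposition.transpose 3 4))
   + 6 * Tp X (Transposition.transpose 1 2 \<circ> (Transposition.transpose 2 3 \<circ> (Transposition.transpose 3 4)))"
  apply (simp only: UNIV4')
  apply (subst sum_over_permutations_insert, simp, simp)+
  apply (simp add: Tpc_0 Tpc_1 Tpc_2 Tpc_3 Tpc_4 Tpc_5 Tpc_6 Tpc_7 Tpc_8 Tpc_9 Tpc_10 Tpc_11 Tpc_12 Tpc_13 Tpc_14 Tpc_15 Tpc_16 Tpc_17 Tpc_18)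
  done

lemma trace_P:
  fixes X :: "complex^'n::finite^'n"
  shows "trace ((P_sym4::complex^('n^4)^('n^4)) ** tensor4 X) = (1/24) * (\<Sum>p\<in>{p. p permutes (UNIV::4 set)}. Tp X p)"
proof -
  let ?S = "{p. p permutes (UNIV::4 set)}"
  let ?T = "tensor4 X"
  have e: "(P_sym4::complex^('n^4)^('n^4))$i$k * ?T$k$i = (1/24) * (\<Sum>p\<in>?S. if k = (\<chi> m. i$(p m)) then ?T$k$i else 0)" for i k
    unfolding P_sym4_def perm_op_def by (simp add: sum_distrib_left sum_distrib_right) (rule sum.cong, auto)
  have "trace ((P_sym4::complex^('n^4)^('n^4)) ** ?T) = (\<Sum>i\<in>UNIV. \<Sum>k\<in>UNIV. (P_sym4::complex^('n^4)^('n^4))$i$k * ?T$k$i)"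
    by (simp add: trace_def matrix_matrix_mult_def)
  also have "\<dots> = (\<Sum>i\<in>UNIV. (\<Sum>p\<in>?S. ?T$(\<chi> m. i$(p m))$i / 24))"
    unfolding e
    apply (rule sum.cong[OF refl])
    apply (simp add: sum_distrib_left)
    apply (subst sum.swap)
    apply (rule sum.cong[OF refl])
    apply (simp add: if_distrib[of "\<lambda>x. x / 24"] sum.delta' cong: if_cong)
    done
  also have "\<dots> = (1/24) * (\<Sum>p\<in>?S. Tp X p)"
    by (simp add: Tp_def tensor4_def sum_divide_distrib[symmetric] sum.swap[of _ UNIV ?S])
  finally show ?thesis .
qed

lemma poly_part:
  fixes y c :: real
  assumes c3: "c^3 = 2" and c1: "1 < c" and c2: "c < 13/10"
  shows "6 + 8*y - 2*y^4 \<le> (6+12*c+9*c^2)/5 * (1+y^2)^2"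
    and "6 + 8*y - 2*y^4 = (6+12*c+9*c^2)/5 * (1+y^2)^2 \<longleftrightarrow> y = c - 1"
proof -
  define A where "A = 16+12*c+9*c^2"
  define B where "B = 21*c^2+18*c+24"
  define R where "R = 24 - 21*c + 28*y + 30*y*c - 18*y*c^2 - 18*y^2 + 27*y^2*c"
  have idr: "(6+12*c+9*c^2)*(1+y^2)^2 - 5*(6+8*y-2*y^4) = (y-c+1)^2*(A*(y+c-1)^2 + (B-(c-1)^2*A)) + (c^3-2)*R"
    unfolding A_def B_def R_def by algebra
  have id: "(6+12*c+9*c^2)/5*(1+y^2)^2 - (6+8*y-2*y^4) = (y-c+1)^2*(A*(y+c-1)^2 + (B-(c-1)^2*A)) / 5"
    using idr c3 by (simp add: field_simps)
  have csq: "1 < c^2" "c^2 < 169/100"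
    using c1 c2 power_strict_mono[of 1 c 2] power_strict_mono[of c "13/10" 2] by (auto simp: power2_eq_square)
  have hA: "0 < A" "A \<le> 47" using csq c1 c2 unfolding A_def by linarith+
  have cm: "(c-1)^2 \<le> 9/100"
    using c1 c2 power_mono[of "c-1" "3/10" 2] by (simp add: power2_eq_square)
  have "(c-1)^2 * A \<le> 9/100 * 47"
    using mult_mono[OF cm hA(2)] hA(1) by simp
  moreover have "63 \<le> B" using csq c1 unfolding B_def by linarith
  ultimately have P: "0 < B - (c-1)^2*A" by linarith
  have S: "0 < A*(y+c-1)^2 + (B-(c-1)^2*A)"
    using P hA(1) by (simp add: add_nonneg_pos)
  show "6 + 8*y - 2*y^4 \<le> (6+12*c+9*c^2)/5 * (1+y^2)^2"
    using id S by (smt (verit) divide_nonneg_pos mult_nonneg_nonneg zero_le_power2)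
  have "6 + 8*y - 2*y^4 = (6+12*c+9*c^2)/5 * (1+y^2)^2 \<longleftrightarrow> (y-c+1)^2*(A*(y+c-1)^2 + (B-(c-1)^2*A)) = 0"
    using id by auto
  also have "\<dots> \<longleftrightarrow> y = c - 1" using S by auto
  finally show "6 + 8*y - 2*y^4 = (6+12*c+9*c^2)/5 * (1+y^2)^2 \<longleftrightarrow> y = c - 1" .
qed

lemma lagrange_c:
  fixes u w :: "'b \<Rightarrow> complex"
  shows "(\<Sum>b\<in>B. u b * cnj (u b)) * (\<Sum>b\<in>B. w b * cnj (w b)) - (\<Sum>b\<in>B. u b * cnj (w b)) * cnj (\<Sum>b\<in>B. u b * cnj (w b))
     = (\<Sum>b\<in>B. \<Sum>e\<in>B. (u b * w e - u e * w b) * cnj (u b * w e - u e * w b)) / 2"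
proof -
  have ex: "(u b * w e - u e * w b) * cnj (u b * w e - u e * w b)
     = (u b * cnj (u b)) * (w e * cnj (w e)) - (u b * cnj (w b)) * (w e * cnj (u e))
       - (w b * cnj (u b)) * (u e * cnj (w e)) + (w b * cnj (w b)) * (u e * cnj (u e))" for b e
    by (simp add: algebra_simps)
  have cs: "cnj (\<Sum>b\<in>B. u b * cnj (w b)) = (\<Sum>b\<in>B. w b * cnj (u b))"
    by (simp add: mult.commute)
  show ?thesis
    unfolding ex cs
    apply (simp only: sum.distrib sum_subtractf sum_distrib_left[symmetric] sum_distrib_right[symmetric])
    apply (simp add: algebra_simps)
    done
qed

lemma lagrange:
  fixes u w :: "'b \<Rightarrow> complex"
  shows "(\<Sum>b\<in>B. (cmod (u b))^2) * (\<Sum>b\<in>B. (cmod (w b))^2) - (cmod (\<Sum>b\<in>B. u b * cnj (w b)))^2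
     = (\<Sum>b\<in>B. \<Sum>e\<in>B. (cmod (u b * w e - u e * w b))^2) / 2"
proof -
  have "complex_of_real ((\<Sum>b\<in>B. (cmod (u b))^2) * (\<Sum>b\<in>B. (cmod (w b))^2) - (cmod (\<Sum>b\<in>B. u b * cnj (w b)))^2)
     = complex_of_real ((\<Sum>b\<in>B. \<Sum>e\<in>B. (cmod (u b * w e - u e * w b))^2) / 2)"
    apply (simp only: of_real_diff of_real_mult of_real_sum of_real_divide complex_norm_square)
    using lagrange_c[of u B w] by simp
  thus ?thesis using of_real_eq_iff by blast
qed

definition Rw :: "complex^'n::finite^'n \<Rightarrow> 'n \<Rightarrow> real" where
  "Rw X a = (\<Sum>b\<in>UNIV. (cmod (X$a$b))^2)"
definition Ym :: "complex^'n::finite^'n \<Rightarrow> 'n \<Rightarrow> 'n \<Rightarrow> complex" where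
  "Ym X a c = (\<Sum>b\<in>UNIV. X$a$b * X$b$c)"
definition S2 :: "complex^'n::finite^'n \<Rightarrow> real" where
  "S2 X = (\<Sum>a\<in>UNIV. Rw X a)"
definition S4 :: "complex^'n::finite^'n \<Rightarrow> real" where
  "S4 X = (\<Sum>a\<in>UNIV. \<Sum>c\<in>UNIV. (cmod (Ym X a c))^2)"

lemma herm_cnj: "hermitian_mat X \<Longrightarrow> cnj (X$a$b) = X$b$a"
  unfolding hermitian_mat_def by (metis complex_cnj_cnj)

lemma herm_diag: "hermitian_mat X \<Longrightarrow> X$a$a = complex_of_real (Re (X$a$a))"
  using herm_cnj[of X a a] by (metis Reals_cnj_iff complex_is_Real_iff of_real_Re)

lemma Ym_herm: "hermitian_mat X \<Longrightarrow> Ym X c a = cnj (Ym X a c)"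
  unfolding Ym_def by (simp add: herm_cnj mult.commute)

lemma c2_eq: assumes "hermitian_mat X"
  shows "(\<Sum>a\<in>UNIV. \<Sum>b\<in>UNIV. X$b$a * X$a$b) = complex_of_real (S2 X)"
proof -
  have "X$b$a * X$a$b = complex_of_real ((cmod (X$a$b))^2)" for a b
    by (subst complex_norm_square) (simp add: herm_cnj[OF assms, of a b, symmetric] mult.commute)
  thus ?thesis by (simp add: S2_def Rw_def)
qed

lemma c4_eq: assumes "hermitian_mat X"
  shows "(\<Sum>a\<in>UNIV. \<Sum>b\<in>UNIV. \<Sum>c\<in>UNIV. \<Sum>d\<in>UNIV. X$b$a * X$c$b * X$d$c * X$a$d) = complex_of_real (S4 X)"
proof -
  have "(\<Sum>a\<in>UNIV. \<Sum>b\<in>UNIV. \<Sum>c\<in>UNIV. \<Sum>d\<in>UNIV. X$b$a * X$c$b * X$d$c * X$a$d)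
      = (\<Sum>a\<in>UNIV. \<Sum>c\<in>UNIV. \<Sum>b\<in>UNIV. \<Sum>d\<in>UNIV. (X$c$b * X$b$a) * (X$a$d * X$d$c))"
    by (subst sum.swap) (simp add: mult_ac)
  also have "\<dots> = (\<Sum>a\<in>UNIV. \<Sum>c\<in>UNIV. Ym X c a * Ym X a c)"
    by (simp add: Ym_def sum_product)
  also have "\<dots> = (\<Sum>a\<in>UNIV. \<Sum>c\<in>UNIV. complex_of_real ((cmod (Ym X a c))^2))"
    by (intro sum.cong refl, subst complex_norm_square) (metis Ym_herm[OF assms] mult.commute)
  finally show ?thesis by (simp add: S4_def)
qed

lemma c3_eq: "(\<Sum>a\<in>UNIV. \<Sum>b\<in>UNIV. \<Sum>c\<in>UNIV. X$b$a * X$c$b * X$a$c) = (\<Sum>a\<in>UNIV. \<Sum>c\<in>UNIV. Ym X c a * X$a$c)"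
proof -
  have "(\<Sum>a\<in>UNIV. \<Sum>b\<in>UNIV. \<Sum>c\<in>UNIV. X$b$a * X$c$b * X$a$c)
      = (\<Sum>a\<in>UNIV. \<Sum>c\<in>UNIV. \<Sum>b\<in>UNIV. (X$c$b * X$b$a) * X$a$c)"
    by (subst sum.swap) (simp add: mult_ac)
  thus ?thesis by (simp add: Ym_def sum_distrib_right)
qed

lemma term_eq: assumes "hermitian_mat X"
  shows "Rw X a * Rw X c - (cmod (Ym X a c))^2 = (\<Sum>b\<in>UNIV. \<Sum>e\<in>UNIV. (cmod (X$a$b * X$c$e - X$a$e * X$c$b))^2) / 2"
proof -
  have 1: "Rw X c = (\<Sum>b\<in>UNIV. (cmod (X$c$b))^2)" by (simp add: Rw_def)
  have 2: "Ym X a c = (\<Sum>b\<in>UNIV. X$a$b * cnj (X$c$b))"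
    by (simp add: Ym_def herm_cnj[OF assms])
  show ?thesis unfolding 2 unfolding Rw_def
    using lagrange[of "\<lambda>b. X$a$b" UNIV "\<lambda>b. X$c$b"] by simp
qed

lemma term_nonneg: assumes "hermitian_mat X"
  shows "(cmod (Ym X a c))^2 \<le> Rw X a * Rw X c"
  using term_eq[OF assms, of a c] by (smt (verit) divide_nonneg_pos sum_nonneg zero_le_power2)

lemma S_diff: "S2 X ^ 2 - S4 X = (\<Sum>a\<in>UNIV. \<Sum>c\<in>UNIV. Rw X a * Rw X c - (cmod (Ym X a c))^2)"
  by (simp add: S2_def S4_def power2_eq_square sum_product sum_subtractf)

lemma S4_le: assumes "hermitian_mat X" shows "S4 X \<le> S2 X ^ 2"
proof -
  have "0 \<le> (\<Sum>a\<in>UNIV. \<Sum>c\<in>UNIV. Rw X a * Rw X c - (cmod (Ym X a c))^2)"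
    using term_nonneg[OF assms] by (simp add: sum_nonneg)
  thus ?thesis using S_diff[of X] by simp
qed

lemma c3_bound: assumes h: "hermitian_mat X"
  shows "(cmod (\<Sum>a\<in>UNIV. \<Sum>c\<in>UNIV. Ym X c a * X$a$c))^2 \<le> S2 X * S4 X"
proof -
  let ?f = "\<lambda>a c. cmod (Ym X c a)" and ?h = "\<lambda>a c. cmod (X$a$c)"
  have n1: "cmod (\<Sum>a\<in>UNIV. \<Sum>c\<in>UNIV. Ym X c a * X$a$c) \<le> (\<Sum>a\<in>UNIV. \<Sum>c\<in>UNIV. ?f a c * ?h a c)"
  proof -
    have "cmod (\<Sum>a\<in>UNIV. \<Sum>c\<in>UNIV. Ym X c a * X$a$c) \<le> (\<Sum>a\<in>UNIV. cmod (\<Sum>c\<in>UNIV. Ym X c a * X$a$c))"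
      by (rule norm_sum)
    also have "\<dots> \<le> (\<Sum>a\<in>UNIV. \<Sum>c\<in>UNIV. cmod (Ym X c a * X$a$c))"
      by (intro sum_mono norm_sum)
    finally show ?thesis by (simp add: norm_mult)
  qed
  have cs: "(\<Sum>a\<in>UNIV. \<Sum>c\<in>UNIV. ?f a c * ?h a c)^2 \<le> (\<Sum>a\<in>UNIV. \<Sum>c\<in>UNIV. (?f a c)^2) * (\<Sum>a\<in>UNIV. \<Sum>c\<in>UNIV. (?h a c)^2)"
    using Cauchy_Schwarz_ineq_sum[of "\<lambda>p. ?f (fst p) (snd p)" "\<lambda>p. ?h (fst p) (snd p)" "UNIV \<times> UNIV"]
    by (simp add: sum.cartesian_product split_beta)
  have f2: "(\<Sum>a\<in>UNIV. \<Sum>c\<in>UNIV. (?f a c)^2) = S4 X"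
    unfolding S4_def by (intro sum.cong refl) (metis Ym_herm[OF h] complex_mod_cnj)
  have h2: "(\<Sum>a\<in>UNIV. \<Sum>c\<in>UNIV. (?h a c)^2) = S2 X"
    by (simp add: S2_def Rw_def)
  have "(cmod (\<Sum>a\<in>UNIV. \<Sum>c\<in>UNIV. Ym X c a * X$a$c))^2 \<le> (\<Sum>a\<in>UNIV. \<Sum>c\<in>UNIV. ?f a c * ?h a c)^2"
    using n1 by (intro power_mono) auto
  also have "\<dots> \<le> S4 X * S2 X" using cs f2 h2 by simp
  finally show ?thesis by (simp add: mult.commute)
qed

lemma sum2_ge:
  fixes g :: "'n::finite \<Rightarrow> 'n \<Rightarrow> real"
  assumes "\<And>b e. 0 \<le> g b e" "a \<noteq> c"
  shows "g a c + g c a \<le> (\<Sum>b\<in>UNIV. \<Sum>e\<in>UNIV. g b e)"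
proof -
  have "g a c \<le> (\<Sum>e\<in>UNIV. g a e)" "g c a \<le> (\<Sum>e\<in>UNIV. g c e)"
    using assms by (auto intro!: member_le_sum)
  hence "g a c + g c a \<le> (\<Sum>b\<in>{a,c}. \<Sum>e\<in>UNIV. g b e)" using assms by simp
  also have "\<dots> \<le> (\<Sum>b\<in>UNIV. \<Sum>e\<in>UNIV. g b e)"
    using assms by (intro sum_mono2) (auto intro: sum_nonneg)
  finally show ?thesis .
qed

lemma S2_pos: assumes "X \<noteq> 0" shows "0 < S2 X"
proof -
  obtain i j where ij: "X$i$j \<noteq> 0" using assms by (metis vec_eq_iff zero_index)
  have "0 < Rw X i" unfolding Rw_def
    by (rule sum_pos2[of UNIV j]) (use ij in auto)
  thus ?thesis unfolding S2_def
    by (intro sum_pos2[of UNIV i]) (auto simp: Rw_def intro: sum_nonneg)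
qed

lemma S4_less: assumes h: "hermitian_mat X" and t: "(\<Sum>a\<in>UNIV. X$a$a) = 0" and nz: "X \<noteq> 0"
  shows "S4 X < S2 X ^ 2"
proof -
  define z where "z a c = X$a$a*X$c$c - X$a$c*X$c$a" for a c
  have "(\<Sum>a\<in>UNIV. \<Sum>c\<in>UNIV. z a c) = (\<Sum>a\<in>UNIV. X$a$a) * (\<Sum>a\<in>UNIV. X$a$a) - (\<Sum>a\<in>UNIV. \<Sum>b\<in>UNIV. X$b$a * X$a$b)"
    unfolding z_def by (simp add: sum_subtractf sum_product mult.commute)
  also have "\<dots> = - complex_of_real (S2 X)" using t c2_eq[OF h] by simp
  finally have sz: "(\<Sum>a\<in>UNIV. \<Sum>c\<in>UNIV. z a c) \<noteq> 0" using S2_pos[OF nz] by simp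
  obtain a c where zac: "z a c \<noteq> 0"
    using sz by (metis (no_types, lifting) sum.neutral)
  have ac: "a \<noteq> c" using zac unfolding z_def by auto
  have "2 * (cmod (z a c))^2 \<le> (\<Sum>b\<in>UNIV. \<Sum>e\<in>UNIV. (cmod (X$a$b * X$c$e - X$a$e * X$c$b))^2)"
  proof -
    have "cmod (X$a$c * X$c$a - X$a$a * X$c$c) = cmod (z a c)"
      unfolding z_def by (metis minus_diff_eq norm_minus_cancel)
    hence "(cmod (X$a$a * X$c$c - X$a$c * X$c$a))^2 + (cmod (X$a$c * X$c$a - X$a$a * X$c$c))^2 = 2 * (cmod (z a c))^2"
      unfolding z_def by simp
    moreover have "(cmod (X$a$a * X$c$c - X$a$c * X$c$a))^2 + (cmod (X$a$c * X$c$a - X$a$a * X$c$c))^2 \<le> (\<Sum>b\<in>UNIV. \<Sum>e\<in>UNIV. (cmod (X$a$b * X$c$e - X$a$e * X$c$b))^2)"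
      using sum2_ge[of "\<lambda>b e. (cmod (X$a$b * X$c$e - X$a$e * X$c$b))^2" a c] ac by simp
    ultimately show ?thesis by simp
  qed
  hence tpos: "0 < Rw X a * Rw X c - (cmod (Ym X a c))^2"
  proof -
    have "0 < (cmod (z a c))^2" using zac by simp
    thus ?thesis using \<open>2 * (cmod (z a c))^2 \<le> _\<close> term_eq[OF h, of a c] by linarith
  qed
  have "Rw X a * Rw X c - (cmod (Ym X a c))^2 \<le> (\<Sum>c'\<in>UNIV. Rw X a * Rw X c' - (cmod (Ym X a c'))^2)"
    using term_nonneg[OF h] by (intro member_le_sum) auto
  also have "\<dots> \<le> (\<Sum>a'\<in>UNIV. \<Sum>c'\<in>UNIV. Rw X a' * Rw X c' - (cmod (Ym X a' c'))^2)"
    using term_nonneg[OF h] by (intro member_le_sum sum_nonneg) auto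
  finally show ?thesis using tpos S_diff[of X] by simp
qed

lemma consts_c:
  defines "c \<equiv> (2::real) powr (1/3)"
  shows "c^3 = 2" "1 < c" "c < 13/10" "2 powr (2/3) = c^2"
proof -
  have cpos: "0 < c" unfolding c_def by simp
  have "c^3 = c powr (real 3)" using powr_realpow[OF cpos, of 3] by simp
  also have "\<dots> = 2" unfolding c_def by (simp add: powr_powr)
  finally show c3: "c^3 = 2" .
  show "1 < c" unfolding c_def by simp
  show "c < 13/10"
  proof (rule ccontr)
    assume "\<not> c < 13/10"
    hence "(13/10::real)^3 \<le> c^3" by (intro power_mono) auto
    thus False using c3 by (simp add: power3_eq_cube)
  qed
  show "2 powr (2/3) = c^2"
    unfolding c_def power2_eq_square powr_add[symmetric] by simp
qed

theorem mainTheorem8: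
  fixes X :: "complex^'n::finite^'n"
  assumes herm: "hermitian_mat X"
    and nz: "X \<noteq> 0"
  defines "y \<equiv> cmod (trace X) / hs_norm X"
    and "L \<equiv> 24 * Re (trace ((P_sym4 :: complex^('n^4)^('n^4)) ** tensor4 X))
               / (Re (trace (X ** X)) + (Re (trace X))\<^sup>2)\<^sup>2"
  shows "L \<le> 3 + (6 + 8*y - 2*y^4) / (1 + y\<^sup>2)\<^sup>2
    \<and> 3 + (6 + 8*y - 2*y^4) / (1 + y\<^sup>2)\<^sup>2
           \<le> 3/5 * (7 + 4 * 2 powr (1/3) + 3 * 2 powr (2/3))
    \<and> (3 + (6 + 8*y - 2*y^4) / (1 + y\<^sup>2)\<^sup>2
           = 3/5 * (7 + 4 * 2 powr (1/3) + 3 * 2 powr (2/3))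
         \<longleftrightarrow> y = 2 powr (1/3) - 1)
    \<and> (trace X = 0 \<longrightarrow> L < 9)"
proof -
  define c1 where "c1 = (\<Sum>a\<in>UNIV. X$a$a)"
  define s1 where "s1 = Re c1"
  define C3 where "C3 = (\<Sum>a\<in>UNIV. \<Sum>b\<in>UNIV. \<Sum>c\<in>UNIV. X$b$a * X$c$b * X$a$c)"
  define s2 where "s2 = S2 X"
  define s4 where "s4 = S4 X"
  have c1r: "c1 = complex_of_real s1"
  proof -
    have "c1 = (\<Sum>a\<in>UNIV. complex_of_real (Re (X$a$a)))"
      unfolding c1_def by (rule sum.cong[OF refl]) (rule herm_diag[OF herm])
    thus ?thesis unfolding s1_def by simp
  qed
  have trX: "trace X = c1" by (simp add: trace_def c1_def)
  have trXX: "trace (X ** X) = complex_of_real s2"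
  proof -
    have "trace (X ** X) = (\<Sum>a\<in>UNIV. \<Sum>b\<in>UNIV. X$b$a * X$a$b)"
      by (simp add: trace_def matrix_matrix_mult_def mult.commute)
    thus ?thesis using c2_eq[OF herm] s2_def by simp
  qed
  have hs: "hs_norm X = sqrt s2" by (simp add: hs_norm_def s2_def S2_def Rw_def)
  have s2pos: "0 < s2" using S2_pos[OF nz] s2_def by simp
  have s4le: "s4 \<le> s2^2" using S4_le[OF herm] s2_def s4_def by simp
  have C3b: "(cmod C3)^2 \<le> s2 * s4" using c3_bound[OF herm] c3_eq[of X] C3_def s2_def s4_def by simp
  have tr24: "24 * trace ((P_sym4 :: complex^('n^4)^('n^4)) ** tensor4 X)
      = c1^4 + 6 * (complex_of_real s2 * c1^2) + 8 * (C3 * c1) + 3 * (complex_of_real s2)^2 + 6 * complex_of_real s4"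
    unfolding trace_P sum_perms Tp_id Tp_2 Tp_3 Tp_22 Tp_4 c2_eq[OF herm] c4_eq[OF herm]
    by (simp add: c1_def C3_def s2_def s4_def)
  define N where "N = s1^4 + 6 * s2 * s1^2 + 8 * s1 * Re C3 + 3 * s2^2 + 6 * s4"
  have ReN: "24 * Re (trace ((P_sym4 :: complex^('n^4)^('n^4)) ** tensor4 X)) = N"
  proof -
    have "24 * Re (trace ((P_sym4 :: complex^('n^4)^('n^4)) ** tensor4 X)) = Re (24 * trace ((P_sym4 :: complex^('n^4)^('n^4)) ** tensor4 X))"
      by simp
    also have "\<dots> = N" unfolding tr24 c1r N_def
      by (simp add: power2_eq_square power4_eq_xxxx)
    finally show ?thesis .
  qed
  define r where "r = sqrt s2"
  have rpos: "0 < r" using s2pos r_def by simp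
  have s2r: "s2 = r^2" using s2pos r_def by simp
  have yr: "y = \<bar>s1\<bar> / r" unfolding y_def trX hs c1r r_def by simp
  have ys1: "\<bar>s1\<bar> = y * r" using yr rpos by simp
  have y0: "0 \<le> y" using yr rpos by simp
  have Lr: "L = N / (s2 + s1^2)^2"
    unfolding L_def ReN trXX trX c1r by simp
  have C3r: "cmod C3 \<le> r^3"
  proof -
    have "(cmod C3)^2 \<le> (r^3)^2"
      using C3b s4le s2r mult_left_mono[OF s4le, of s2] s2pos
      by (simp add: power_mult_distrib[symmetric] power2_eq_square power3_eq_cube power4_eq_xxxx mult.assoc)
    thus ?thesis using rpos by (meson power2_le_imp_le less_imp_le zero_less_power)
  qed
  have t3: "s1 * Re C3 \<le> y * r^4"
  proof -
    have "s1 * Re C3 \<le> \<bar>s1\<bar> * cmod C3"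
      by (rule order_trans[OF abs_ge_self]) (simp add: abs_mult mult_left_mono abs_Re_le_cmod)
    also have "\<dots> \<le> \<bar>s1\<bar> * r^3" using C3r by (simp add: mult_left_mono)
    also have "\<dots> = y * r^4" using ys1 by (simp add: power3_eq_cube power4_eq_xxxx)
    finally show ?thesis .
  qed
  have s1sq: "s1^2 = y^2 * r^2"
  proof -
    have "s1^2 = \<bar>s1\<bar>^2" by simp
    also have "\<dots> = y^2 * r^2" unfolding ys1 by (simp add: power_mult_distrib)
    finally show ?thesis .
  qed
  have s1q: "s1^4 = y^4 * r^4"
  proof -
    have "s1^4 = (s1^2)^2" by (simp add: power_mult[symmetric])
    also have "\<dots> = y^4 * r^4" unfolding s1sq by (simp add: power_mult_distrib power_mult[symmetric])
    finally show ?thesis .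
  qed
  have Nle: "N \<le> (y^4 + 6*y^2 + 8*y + 9) * r^4"
  proof -
    have "s4 \<le> r^4" using s4le s2r by (simp add: power_mult_distrib[symmetric] power2_eq_square power4_eq_xxxx)
    moreover have "6 * s2 * s1^2 = 6 * (y^2 * r^4)" using s1sq s2r by (simp add: power2_eq_square power4_eq_xxxx algebra_simps)
    moreover have "3 * s2^2 = 3 * r^4" using s2r by (simp add: power2_eq_square power4_eq_xxxx)
    moreover have "(y^4 + 6*y^2 + 8*y + 9) * r^4 = y^4 * r^4 + 6 * (y^2 * r^4) + 8 * (y * r^4) + 9 * r^4"
      by (simp add: algebra_simps)
    ultimately show ?thesis unfolding N_def using t3 s1q by linarith
  qed
  have Dr: "(s2 + s1^2)^2 = r^4 * (1+y^2)^2"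
    using s1sq s2r by (simp add: power2_eq_square power4_eq_xxxx algebra_simps)
  have ypos: "0 < 1 + y^2" by (simp add: add_pos_nonneg)
  have rhs: "3 + (6 + 8*y - 2*y^4) / (1 + y\<^sup>2)\<^sup>2 = (y^4 + 6*y^2 + 8*y + 9) / (1+y^2)^2"
  proof -
    have dpos: "0 < (1 + y^2)^2" using ypos by simp
    have "3 + (6 + 8*y - 2*y^4) / (1 + y\<^sup>2)\<^sup>2 = (3 * (1 + y^2)^2 + (6 + 8*y - 2*y^4)) / (1 + y\<^sup>2)\<^sup>2"
      using dpos by (simp add: add_divide_distrib)
    also have "3 * (1 + y^2)^2 + (6 + 8*y - 2*y^4) = y^4 + 6*y^2 + 8*y + 9"
      by (simp add: power2_eq_square power4_eq_xxxx algebra_simps)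
    finally show ?thesis .
  qed
  have G1: "L \<le> 3 + (6 + 8*y - 2*y^4) / (1 + y\<^sup>2)\<^sup>2"
  proof -
    have "L = N / (r^4 * (1+y^2)^2)" using Lr Dr by simp
    also have "\<dots> \<le> ((y^4 + 6*y^2 + 8*y + 9) * r^4) / (r^4 * (1+y^2)^2)"
      using Nle rpos ypos by (intro divide_right_mono) auto
    also have "\<dots> = (y^4 + 6*y^2 + 8*y + 9) / (1+y^2)^2" using rpos by simp
    finally show ?thesis using rhs by simp
  qed
  define c where "c = (2::real) powr (1/3)"
  note cc = consts_c[folded c_def]
  have M: "3/5 * (7 + 4 * 2 powr (1/3) + 3 * 2 powr (2/3)) = 3 + (6+12*c+9*c^2)/5"
    unfolding cc(4) c_def[symmetric] by simp
  have eqv: "3 + (6 + 8*y - 2*y^4) / (1 + y\<^sup>2)\<^sup>2 \<le> 3 + (6+12*c+9*c^2)/5 \<longleftrightarrow> 6 + 8*y - 2*y^4 \<le> (6+12*c+9*c^2)/5 * (1+y^2)^2"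
    using ypos by (simp add: pos_divide_le_eq)
  have eqv2: "3 + (6 + 8*y - 2*y^4) / (1 + y\<^sup>2)\<^sup>2 = 3 + (6+12*c+9*c^2)/5 \<longleftrightarrow> 6 + 8*y - 2*y^4 = (6+12*c+9*c^2)/5 * (1+y^2)^2"
    using ypos by (simp add: divide_eq_eq)
  have G2: "3 + (6 + 8*y - 2*y^4) / (1 + y\<^sup>2)\<^sup>2 \<le> 3/5 * (7 + 4 * 2 powr (1/3) + 3 * 2 powr (2/3))"
    unfolding M eqv using poly_part(1)[OF cc(1-3)] .
  have G3: "(3 + (6 + 8*y - 2*y^4) / (1 + y\<^sup>2)\<^sup>2 = 3/5 * (7 + 4 * 2 powr (1/3) + 3 * 2 powr (2/3))
         \<longleftrightarrow> y = 2 powr (1/3) - 1)"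
    unfolding M eqv2 using poly_part(2)[OF cc(1-3), of y] unfolding c_def by simp
  have G4: "trace X = 0 \<longrightarrow> L < 9"
  proof
    assume "trace X = 0"
    hence s10: "s1 = 0" using trX c1r by simp
    have "S4 X < S2 X ^ 2" using S4_less[OF herm _ nz] \<open>trace X = 0\<close> trX c1_def by simp
    hence "s4 < s2^2" using s2_def s4_def by simp
    hence "N < 9 * s2^2" unfolding N_def using s10 by simp
    moreover have "L = N / s2^2" using Lr s10 by simp
    ultimately show "L < 9" using s2pos by (simp add: divide_less_eq)
  qed
  show ?thesis using G1 G2 G3 G4 by blast
qed

end
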